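(* Let $a$ be a weak composition of length $n$. Then \[\mathcal{A}_a=\sum_{S\in\mathrm{HSSF}(a)}\mathfrak{L}_{\mathrm{wt}(S)}.\]
   Context: $D(a)$: $a_i$ left-justified boxes in row $i$, row 1 lowest, columns numbered from the left. For a filling $S$, $\mathrm{wt}(S)$ is the weak composition of length $n$ whose $i$th part is the number of entries $i$. Triples (rows $r<s$): Type A: $\gamma=(r,c),\alpha=(r,c+1),\beta=(s,c+1)$ with $a_r\ge a_s$; Type B: $\gamma=(s,c),\alpha=(s,c+1),\beta=(r,c)$ with $a_s>a_r$; inversion triple: $\beta>\gamma\ge\alpha$ or $\gamma\ge\alpha>\beta$. $\mathcal{A}\mathrm{SSF}(a)$ is the set of fillings of $D(a)$ with positive integers, rows weakly decreasing left to right, distinct entries in each column, all triples inversion triples, and first-column entry of each nonempty row $i$ equal to $i$; $\mathcal{A}_a=\sum_{S\in\mathcal{A}\mathrm{SSF}(a)}x^{\mathrm{wt}(S)}$. $S\in\mathcal{A}\mathrm{SSF}(a)$ is particle-highest if for every entry value $i$ appearing in $S$, either the leftmost occurrence of $i$ is in the first column, or some occurrence of $i^\uparrow$ lies in a column weakly right of the leftmost $i$, where $i^\uparrow$ is the smallest entry of $S$ larger than $i$. $\mathrm{HSSF}(a)$ is the set of particle-highest elements of $\mathcal{A}\mathrm{SSF}(a)$. Fixed slides: a local move replaces consecutive entries $(0,k)$ at positions $p,p+1$ of a weak composition by $(i,j)$ with $i+j=k$, $i,j\ge0$; a fixed slide of $b$ is obtained from $b$ by a (possibly empty) sequence of such moves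 where $j>0$ is required whenever $b_{p+1}\neq 0$. $\mathfrak{L}_b=\sum x^{c}$ over the set of fixed slides $c$ of $b$. *)

theory Defs
  imports Main
begin

text \<open>Rows are numbered 1..n (row 1 lowest), so row i has a!(i-1) boxes.
  Cells are pairs (row, column), columns numbered from 1.\<close>

definition rowlen :: "nat list \<Rightarrow> nat \<Rightarrow> nat" where
  "rowlen a i = a ! (i - 1)"

definition diag :: "nat list \<Rightarrow> (nat \<times> nat) set" where
  "diag a = {(i, c). 1 \<le> i \<and> i \<le> length a \<and> 1 \<le> c \<and> c \<le> rowlen a i}"

type_synonym filling = "nat \<times> nat \<Rightarrow> nat"

definition wt :: "nat list \<Rightarrow> filling \<Rightarrow> nat list" where
  "wt a S = map (\<lambda>i. card {x \<in> diag a. S x = i}) [1..<length a + 1]"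

definition inv_triple :: "nat \<Rightarrow> nat \<Rightarrow> nat \<Rightarrow> bool" where
  "inv_triple \<beta> \<gamma> \<alpha> \<longleftrightarrow> (\<beta> > \<gamma> \<and> \<gamma> \<ge> \<alpha>) \<or> (\<gamma> \<ge> \<alpha> \<and> \<alpha> > \<beta>)"

text \<open>Type A triples: rows r<s, a_r \<ge> a_s, cells gamma=(r,c), alpha=(r,c+1), beta=(s,c+1);
  Type B triples: rows r<s, a_s > a_r, gamma=(s,c), alpha=(s,c+1), beta=(r,c).\<close>
definition all_triples_inv :: "nat list \<Rightarrow> filling \<Rightarrow> bool" where
  "all_triples_inv a S \<longleftrightarrow>
    (\<forall>r s c. r < s \<and> rowlen a r \<ge> rowlen a s \<and>
        (r, c) \<in> diag a \<and> (r, c+1) \<in> diag a \<and> (s, c+1) \<in> diag a \<longrightarrow>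
        inv_triple (S (s, c+1)) (S (r, c)) (S (r, c+1))) \<and>
    (\<forall>r s c. r < s \<and> rowlen a s > rowlen a r \<and>
        (s, c) \<in> diag a \<and> (s, c+1) \<in> diag a \<and> (r, c) \<in> diag a \<longrightarrow>
        inv_triple (S (r, c)) (S (s, c)) (S (s, c+1)))"

definition ASSF :: "nat list \<Rightarrow> filling set" where
  "ASSF a = {S.
     (\<forall>x. x \<notin> diag a \<longrightarrow> S x = 0) \<and>
     (\<forall>x \<in> diag a. S x > 0) \<and>
     (\<forall>i c. (i, c) \<in> diag a \<and> (i, c+1) \<in> diag a \<longrightarrow> S (i, c) \<ge> S (i, c+1)) \<and>
     (\<forall>i j c. (i, c) \<in> diag a \<and> (j, c) \<in> diag a \<and> i \<noteq> j \<longrightarrow> S (i, c) \<noteq> S (j, c)) \<and>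
     all_triples_inv a S \<and>
     (\<forall>i. (i, 1) \<in> diag a \<longrightarrow> S (i, 1) = i)}"

text \<open>Coefficient of x^c in the atom A_a.\<close>
definition atom_coeff :: "nat list \<Rightarrow> nat list \<Rightarrow> nat" where
  "atom_coeff a c = card {S \<in> ASSF a. wt a S = c}"

definition entries :: "nat list \<Rightarrow> filling \<Rightarrow> nat set" where
  "entries a S = S ` diag a"

definition leftmost_col :: "nat list \<Rightarrow> filling \<Rightarrow> nat \<Rightarrow> nat" where
  "leftmost_col a S v = (LEAST c. \<exists>r. (r, c) \<in> diag a \<and> S (r, c) = v)"

definition particle_highest :: "nat list \<Rightarrow> filling \<Rightarrow> bool" where
  "particle_highest a S \<longleftrightarrow>
    (\<forall>v \<in> entries a S.
       leftmost_col a S v = 1 \<or>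
       (\<exists>u. u \<in> entries a S \<and> v < u \<and> (\<forall>w \<in> entries a S. v < w \<longrightarrow> u \<le> w) \<and>
            (\<exists>r c. (r, c) \<in> diag a \<and> S (r, c) = u \<and> c \<ge> leftmost_col a S v)))"

definition HSSF :: "nat list \<Rightarrow> filling set" where
  "HSSF a = {S \<in> ASSF a. particle_highest a S}"

text \<open>Fixed slides of b (0-indexed positions p, p+1 of the list).\<close>
inductive fixed_slide :: "nat list \<Rightarrow> nat list \<Rightarrow> bool" for b where
  refl: "fixed_slide b b"
| move: "\<lbrakk>fixed_slide b c; Suc p < length c; c ! p = 0; c ! Suc p = k; i + j = k;
          b ! Suc p \<noteq> 0 \<longrightarrow> j > 0\<rbrakk>
         \<Longrightarrow> fixed_slide b (c[p := i, Suc p := j])"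

text \<open>Coefficient of x^c in the fundamental slide polynomial L_b
  (the set of fixed slides is a set, so each contributes once).\<close>
definition slide_coeff :: "nat list \<Rightarrow> nat list \<Rightarrow> nat" where
  "slide_coeff b c = (if fixed_slide b c then 1 else 0)"

end

theory Submission imports Defs "HOL-Library.FuncSet" begin

lemma diag_mem: "(i,c) \<in> diag a \<longleftrightarrow> 1 \<le> i \<and> i \<le> length a \<and> 1 \<le> c \<and> c \<le> rowlen a i"
  by (simp add: diag_def)

lemma diag_left: "(i, Suc c) \<in> diag a \<Longrightarrow> 1 \<le> c \<Longrightarrow> (i, c) \<in> diag a"
  by (simp add: diag_def)

lemma diag_first: "(i, c) \<in> diag a \<Longrightarrow> (i, 1) \<in> diag a"
  by (simp add: diag_def)

lemma finite_diag: "finite (diag a)"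
proof -
  have "diag a \<subseteq> {1..length a} \<times> {1..Max (set a)}"
  proof
    fix x assume "x \<in> diag a"
    then obtain i c where x: "x = (i,c)" and h: "1 \<le> i" "i \<le> length a" "1 \<le> c" "c \<le> rowlen a i"
      by (auto simp: diag_def)
    have "a ! (i - 1) \<in> set a" using h by auto
    then have "rowlen a i \<le> Max (set a)" by (simp add: rowlen_def)
    then show "x \<in> {1..length a} \<times> {1..Max (set a)}" using h x by auto
  qed
  then show ?thesis by (rule finite_subset) auto
qed

lemma ASSF_D:
  assumes "S \<in> ASSF a"
  shows "\<And>x. x \<notin> diag a \<Longrightarrow> S x = 0"
    and "\<And>x. x \<in> diag a \<Longrightarrow> S x > 0"
    and "\<And>i c. (i, c) \<in> diag a \<Longrightarrow> (i, c+1) \<in> diag a \<Longrightarrow> S (i, c) \<ge> S (i, c+1)"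
    and "\<And>i j c. (i, c) \<in> diag a \<Longrightarrow> (j, c) \<in> diag a \<Longrightarrow> i \<noteq> j \<Longrightarrow> S (i, c) \<noteq> S (j, c)"
    and "all_triples_inv a S"
    and "\<And>i. (i, 1) \<in> diag a \<Longrightarrow> S (i, 1) = i"
  using assms by (auto simp: ASSF_def)

lemma ASSF_le_row:
  assumes S: "S \<in> ASSF a" and x: "(i, c) \<in> diag a"
  shows "S (i, c) \<le> i"
  using x
proof (induction c)
  case 0 then show ?case by (simp add: diag_def)
next
  case (Suc c)
  show ?case
  proof (cases "c = 0")
    case True then show ?thesis using Suc.prems ASSF_D(6)[OF S] by simp
  next
    case False
    then have "(i, c) \<in> diag a" using diag_left[OF Suc.prems] by simp
    then show ?thesis using Suc.IH ASSF_D(3)[OF S, of i c] Suc.prems by fastforce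
  qed
qed

lemma ASSF_le_n:
  assumes S: "S \<in> ASSF a" and x: "x \<in> diag a"
  shows "S x \<le> length a"
proof -
  obtain i c where "x = (i,c)" by (cases x)
  then show ?thesis using ASSF_le_row[OF S, of i c] x by (auto simp: diag_def)
qed

lemma ASSF_col_inj:
  assumes S: "S \<in> ASSF a" and "x \<in> diag a" "y \<in> diag a" "S x = S y" "snd x = snd y"
  shows "x = y"
  using assms ASSF_D(4)[OF S, of "fst x" "snd x" "fst y"] by (cases x, cases y) auto

lemma finite_entries: "finite (entries a S)"
  unfolding entries_def using finite_diag by simp

lemma finite_ASSF: "finite (ASSF a)"
proof -
  let ?P = "PiE (diag a) (\<lambda>_. {0..length a})"
  have fin: "finite ?P" using finite_diag by (intro finite_PiE) auto
  have "inj_on (\<lambda>S. restrict S (diag a)) (ASSF a)"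
  proof (rule inj_onI)
    fix S T assume "S \<in> ASSF a" "T \<in> ASSF a" "restrict S (diag a) = restrict T (diag a)"
    then show "S = T"
      by (metis ASSF_D(1) ext restrict_apply')
  qed
  moreover have "(\<lambda>S. restrict S (diag a)) ` ASSF a \<subseteq> ?P"
    using ASSF_le_n by fastforce
  ultimately show ?thesis using fin by (meson finite_imageD finite_subset)
qed


lemma entries_iff: "v \<in> entries a S \<longleftrightarrow> (\<exists>r c. (r,c) \<in> diag a \<and> S (r,c) = v)"
  unfolding entries_def by force

lemma leftmost_ex:
  assumes "v \<in> entries a S"
  shows "\<exists>r. (r, leftmost_col a S v) \<in> diag a \<and> S (r, leftmost_col a S v) = v"
proof -
  from assms obtain r c where "(r,c) \<in> diag a" "S (r,c) = v" by (auto simp: entries_iff)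
  then have "\<exists>c r. (r, c) \<in> diag a \<and> S (r, c) = v" by blast
  then show ?thesis unfolding leftmost_col_def by (rule LeastI_ex)
qed

lemma leftmost_le:
  assumes "(r,c) \<in> diag a" "S (r,c) = v"
  shows "leftmost_col a S v \<le> c"
  unfolding leftmost_col_def using assms by (blast intro: Least_le)

lemma leftmost_ge1:
  assumes "v \<in> entries a S"
  shows "leftmost_col a S v \<ge> 1"
  using leftmost_ex[OF assms] by (auto simp: diag_def)

definition upv :: "nat list \<Rightarrow> filling \<Rightarrow> nat \<Rightarrow> nat" where
  "upv a S v = (LEAST u. u \<in> entries a S \<and> v < u)"

definition desc :: "nat list \<Rightarrow> filling \<Rightarrow> nat \<Rightarrow> bool" where
  "desc a S v \<longleftrightarrow> v \<in> entries a S \<and> leftmost_col a S v \<noteq> 1 \<and> (\<exists>u\<in>entries a S. v < u) \<and>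
     (\<forall>r c. (r,c) \<in> diag a \<and> S (r,c) = upv a S v \<longrightarrow> c < leftmost_col a S v)"

lemma upv_props:
  assumes "\<exists>u\<in>entries a S. v < u"
  shows "upv a S v \<in> entries a S" "v < upv a S v"
    "\<And>w. w \<in> entries a S \<Longrightarrow> v < w \<Longrightarrow> upv a S v \<le> w"
proof -
  from assms obtain u where "u \<in> entries a S \<and> v < u" by blast
  then show "upv a S v \<in> entries a S" "v < upv a S v" unfolding upv_def
    by (metis (mono_tags, lifting) LeastI)+
  show "\<And>w. w \<in> entries a S \<Longrightarrow> v < w \<Longrightarrow> upv a S v \<le> w"
    unfolding upv_def by (simp add: Least_le)
qed

lemma leftmost_one:
  assumes S: "S \<in> ASSF a" and v: "v \<in> entries a S" and "leftmost_col a S v = 1"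
  shows "(v,1) \<in> diag a"
proof -
  obtain r where "(r,1) \<in> diag a" "S (r,1) = v" using leftmost_ex[OF v] assms by auto
  then show ?thesis using ASSF_D(6)[OF S] by auto
qed

lemma anchored_leftmost:
  assumes S: "S \<in> ASSF a" and "(v,1) \<in> diag a"
  shows "v \<in> entries a S" "leftmost_col a S v = 1"
proof -
  have "S (v,1) = v" using ASSF_D(6)[OF S] assms by auto
  then show "v \<in> entries a S" using assms by (auto simp: entries_iff)
  then show "leftmost_col a S v = 1"
    using leftmost_le[of v 1 a S v] assms(2) \<open>S (v,1) = v\<close> leftmost_ge1 by fastforce
qed

lemma nonanchored_has_up:
  assumes S: "S \<in> ASSF a" and v: "v \<in> entries a S" and L: "leftmost_col a S v \<noteq> 1"
  shows "\<exists>u\<in>entries a S. v < u"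
proof -
  obtain r c where rc: "(r,c) \<in> diag a" "S (r,c) = v" using v by (auto simp: entries_iff)
  have "v \<le> r" using ASSF_le_row[OF S rc(1)] rc by simp
  have r1: "(r,1) \<in> diag a" using diag_first[OF rc(1)] .
  have "S (r,1) = r" using ASSF_D(6)[OF S r1] .
  moreover have "r \<noteq> v"
  proof
    assume "r = v"
    then show False using anchored_leftmost(2)[OF S] r1 L by simp
  qed
  ultimately have "r \<in> entries a S" "v < r" using r1 \<open>v \<le> r\<close> by (auto simp: entries_iff)
  then show ?thesis by blast
qed

lemma PH_iff:
  assumes S: "S \<in> ASSF a"
  shows "particle_highest a S \<longleftrightarrow> (\<forall>v\<in>entries a S. \<not> desc a S v)"
proof
  assume ph: "particle_highest a S"
  show "\<forall>v\<in>entries a S. \<not> desc a S v"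
  proof (intro ballI notI)
    fix v assume v: "v \<in> entries a S" and d: "desc a S v"
    from ph v obtain u where u: "leftmost_col a S v = 1 \<or> (u \<in> entries a S \<and> v < u \<and> (\<forall>w \<in> entries a S. v < w \<longrightarrow> u \<le> w) \<and>
            (\<exists>r c. (r, c) \<in> diag a \<and> S (r, c) = u \<and> c \<ge> leftmost_col a S v))"
      unfolding particle_highest_def by blast
    have ex: "\<exists>u\<in>entries a S. v < u" using d by (simp add: desc_def)
    show False
    proof (cases "leftmost_col a S v = 1")
      case True then show ?thesis using d by (simp add: desc_def)
    next
      case False
      with u have u2: "u \<in> entries a S" "v < u" "\<forall>w \<in> entries a S. v < w \<longrightarrow> u \<le> w"
        and "\<exists>r c. (r, c) \<in> diag a \<and> S (r, c) = u \<and> c \<ge> leftmost_col a S v" by auto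
      have "u = upv a S v" using upv_props[OF ex] u2 by (meson antisym)
      then show False using d \<open>\<exists>r c. _\<close> unfolding desc_def by (metis leD)
    qed
  qed
next
  assume nd: "\<forall>v\<in>entries a S. \<not> desc a S v"
  show "particle_highest a S"
    unfolding particle_highest_def
  proof (intro ballI)
    fix v assume v: "v \<in> entries a S"
    show "leftmost_col a S v = 1 \<or>
       (\<exists>u. u \<in> entries a S \<and> v < u \<and> (\<forall>w \<in> entries a S. v < w \<longrightarrow> u \<le> w) \<and>
            (\<exists>r c. (r, c) \<in> diag a \<and> S (r, c) = u \<and> c \<ge> leftmost_col a S v))"
    proof (cases "leftmost_col a S v = 1")
      case False
      have ex: "\<exists>u\<in>entries a S. v < u" using nonanchored_has_up[OF S v False] .
      have "\<not> desc a S v" using nd v by auto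
      then obtain r c where "(r,c) \<in> diag a" "S (r,c) = upv a S v" "\<not> c < leftmost_col a S v"
        using False ex v unfolding desc_def by blast
      then show ?thesis using upv_props[OF ex] by (intro disjI2 exI[of _ "upv a S v"]) (auto simp: not_less)
    qed simp
  qed
qed


lemma inv_mono:
  assumes "inv_triple b g al" "mono (f::nat\<Rightarrow>nat)" "g < b \<Longrightarrow> f g \<noteq> f b" "b < al \<Longrightarrow> f b \<noteq> f al"
  shows "inv_triple (f b) (f g) (f al)"
proof -
  have m: "\<And>x y. x \<le> y \<Longrightarrow> f x \<le> f y" using assms(2) by (simp add: mono_def)
  show ?thesis using assms(1) m[of al g] m[of g b] m[of b al] assms(3,4)
    unfolding inv_triple_def by (auto simp: le_less)
qed

lemma inv_refine:
  assumes "inv_triple (f b) (f g) (f al)" "mono (f::nat\<Rightarrow>nat)" "al \<le> g"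
  shows "inv_triple b g al"
proof -
  have m: "\<And>x y. x \<le> y \<Longrightarrow> f x \<le> f y" using assms(2) by (simp add: mono_def)
  show ?thesis using assms(1,3) m[of b g] m[of al b]
    unfolding inv_triple_def by (meson not_le)
qed

lemma coarsen:
  assumes S: "S \<in> ASSF a" and mf: "mono (f::nat\<Rightarrow>nat)"
    and T: "\<And>x. T x = (if x \<in> diag a then f (S x) else 0)"
    and pos: "\<And>x. x \<in> diag a \<Longrightarrow> f (S x) > 0"
    and first: "\<And>i. (i,1) \<in> diag a \<Longrightarrow> f i = i"
    and compat: "\<And>x y. x \<in> diag a \<Longrightarrow> y \<in> diag a \<Longrightarrow> f (S x) = f (S y) \<Longrightarrow> S x < S y \<Longrightarrow> snd y < snd x"
  shows "T \<in> ASSF a"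
proof -
  have m: "\<And>x y. x \<le> y \<Longrightarrow> f x \<le> f y" using mf by (simp add: mono_def)
  note SD = ASSF_D[OF S]
  have tr: "all_triples_inv a T"
  proof -
    from SD(5) have A: "\<And>r s c. r < s \<Longrightarrow> rowlen a r \<ge> rowlen a s \<Longrightarrow>
        (r, c) \<in> diag a \<Longrightarrow> (r, c+1) \<in> diag a \<Longrightarrow> (s, c+1) \<in> diag a \<Longrightarrow>
        inv_triple (S (s, c+1)) (S (r, c)) (S (r, c+1))"
      and B: "\<And>r s c. r < s \<Longrightarrow> rowlen a s > rowlen a r \<Longrightarrow>
        (s, c) \<in> diag a \<Longrightarrow> (s, c+1) \<in> diag a \<Longrightarrow> (r, c) \<in> diag a \<Longrightarrow>
        inv_triple (S (r, c)) (S (s, c)) (S (s, c+1))"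
      unfolding all_triples_inv_def by blast+
    show ?thesis unfolding all_triples_inv_def
    proof (intro conjI allI impI)
      fix r s c assume h: "r < s \<and> rowlen a r \<ge> rowlen a s \<and>
        (r, c) \<in> diag a \<and> (r, c+1) \<in> diag a \<and> (s, c+1) \<in> diag a"
      have "inv_triple (f (S (s, c+1))) (f (S (r, c))) (f (S (r, c+1)))"
      proof (rule inv_mono[OF A mf])
        show "S (r, c) < S (s, c + 1) \<Longrightarrow> f (S (r, c)) \<noteq> f (S (s, c + 1))"
          using compat[of "(r,c)" "(s,c+1)"] h by force
        show "S (s, c + 1) < S (r, c + 1) \<Longrightarrow> f (S (s, c + 1)) \<noteq> f (S (r, c + 1))"
          using compat[of "(s,c+1)" "(r,c+1)"] h by force
      qed (use h in auto)
      then show "inv_triple (T (s, c+1)) (T (r, c)) (T (r, c+1))" using h T by simp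
    next
      fix r s c assume h: "r < s \<and> rowlen a s > rowlen a r \<and>
        (s, c) \<in> diag a \<and> (s, c+1) \<in> diag a \<and> (r, c) \<in> diag a"
      have "inv_triple (f (S (r, c))) (f (S (s, c))) (f (S (s, c+1)))"
      proof (rule inv_mono[OF B mf])
        show "S (s, c) < S (r, c) \<Longrightarrow> f (S (s, c)) \<noteq> f (S (r, c))"
          using compat[of "(s,c)" "(r,c)"] h by force
        show "S (r, c) < S (s, c + 1) \<Longrightarrow> f (S (r, c)) \<noteq> f (S (s, c + 1))"
          using compat[of "(r,c)" "(s,c+1)"] h by force
      qed (use h in auto)
      then show "inv_triple (T (r, c)) (T (s, c)) (T (s, c+1))" using h T by simp
    qed
  qed
  show ?thesis unfolding ASSF_def
  proof (intro CollectI conjI allI impI ballI tr)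
    fix x assume "x \<notin> diag a" then show "T x = 0" using T by simp
  next
    fix x assume "x \<in> diag a" then show "T x > 0" using T pos by simp
  next
    fix i c assume h: "(i, c) \<in> diag a \<and> (i, c+1) \<in> diag a"
    then show "T (i, c) \<ge> T (i, c+1)" using T m SD(3) by simp
  next
    fix i j c assume h: "(i, c) \<in> diag a \<and> (j, c) \<in> diag a \<and> i \<noteq> j"
    then have ne: "S (i,c) \<noteq> S (j,c)" using SD(4) by blast
    show "T (i, c) \<noteq> T (j, c)"
    proof
      assume eq: "T (i, c) = T (j, c)"
      then have "f (S (i,c)) = f (S (j,c))" using T h by simp
      then show False using ne compat[of "(i,c)" "(j,c)"] compat[of "(j,c)" "(i,c)"] h
        by (force simp: neq_iff)
    qed
  next
    fix i assume "(i, 1) \<in> diag a" then show "T (i, 1) = i" using T SD(6) first by simp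
  qed
qed

lemma refine:
  assumes T: "T \<in> ASSF a" and mf: "mono (f::nat\<Rightarrow>nat)"
    and TS: "\<And>x. x \<in> diag a \<Longrightarrow> T x = f (S x)"
    and out: "\<And>x. x \<notin> diag a \<Longrightarrow> S x = 0"
    and pos: "\<And>x. x \<in> diag a \<Longrightarrow> S x > 0"
    and first: "\<And>i. (i,1) \<in> diag a \<Longrightarrow> S (i,1) = i"
    and compat: "\<And>x y. x \<in> diag a \<Longrightarrow> y \<in> diag a \<Longrightarrow> f (S x) = f (S y) \<Longrightarrow> S x < S y \<Longrightarrow> snd y < snd x"
  shows "S \<in> ASSF a"
proof -
  have m: "\<And>x y. x \<le> y \<Longrightarrow> f x \<le> f y" using mf by (simp add: mono_def)
  note TD = ASSF_D[OF T]
  have row: "\<And>i c. (i, c) \<in> diag a \<Longrightarrow> (i, c+1) \<in> diag a \<Longrightarrow> S (i, c) \<ge> S (i, c+1)"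
  proof (rule ccontr)
    fix i c assume h: "(i, c) \<in> diag a" "(i, c+1) \<in> diag a" "\<not> S (i, c) \<ge> S (i, c+1)"
    then have "f (S (i,c)) \<le> f (S (i,c+1))" using m by simp
    moreover have "f (S (i,c)) \<ge> f (S (i,c+1))" using TD(3)[OF h(1,2)] TS h by simp
    ultimately show False using compat[of "(i,c)" "(i,c+1)"] h by simp
  qed
  have tr: "all_triples_inv a S"
  proof -
    from TD(5) have A: "\<And>r s c. r < s \<Longrightarrow> rowlen a r \<ge> rowlen a s \<Longrightarrow>
        (r, c) \<in> diag a \<Longrightarrow> (r, c+1) \<in> diag a \<Longrightarrow> (s, c+1) \<in> diag a \<Longrightarrow>
        inv_triple (T (s, c+1)) (T (r, c)) (T (r, c+1))"
      and B: "\<And>r s c. r < s \<Longrightarrow> rowlen a s > rowlen a r \<Longrightarrow>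
        (s, c) \<in> diag a \<Longrightarrow> (s, c+1) \<in> diag a \<Longrightarrow> (r, c) \<in> diag a \<Longrightarrow>
        inv_triple (T (r, c)) (T (s, c)) (T (s, c+1))"
      unfolding all_triples_inv_def by blast+
    show ?thesis unfolding all_triples_inv_def
    proof (intro conjI allI impI)
      fix r s c assume h: "r < s \<and> rowlen a r \<ge> rowlen a s \<and>
        (r, c) \<in> diag a \<and> (r, c+1) \<in> diag a \<and> (s, c+1) \<in> diag a"
      show "inv_triple (S (s, c+1)) (S (r, c)) (S (r, c+1))"
        by (rule inv_refine[OF _ mf]) (use h A TS row in auto)
    next
      fix r s c assume h: "r < s \<and> rowlen a s > rowlen a r \<and>
        (s, c) \<in> diag a \<and> (s, c+1) \<in> diag a \<and> (r, c) \<in> diag a"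
      show "inv_triple (S (r, c)) (S (s, c)) (S (s, c+1))"
        by (rule inv_refine[OF _ mf]) (use h B TS row in auto)
    qed
  qed
  show ?thesis unfolding ASSF_def
  proof (intro CollectI conjI allI impI ballI tr)
    fix x assume "x \<notin> diag a" then show "S x = 0" using out by simp
  next
    fix x assume "x \<in> diag a" then show "S x > 0" using pos by simp
  next
    fix i c assume h: "(i, c) \<in> diag a \<and> (i, c+1) \<in> diag a"
    then show "S (i, c) \<ge> S (i, c+1)" using row by simp
  next
    fix i j c assume h: "(i, c) \<in> diag a \<and> (j, c) \<in> diag a \<and> i \<noteq> j"
    then show "S (i, c) \<noteq> S (j, c)" using TD(4)[of i c j] TS by auto
  next
    fix i assume "(i, 1) \<in> diag a" then show "S (i, 1) = i" using first by simp
  qed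
qed


definition gE :: "nat set \<Rightarrow> nat \<Rightarrow> nat" where
  "gE Q v = (if \<exists>q\<in>Q. v \<le> q then (LEAST q. q \<in> Q \<and> v \<le> q) else v)"

lemma gE_props:
  assumes "\<exists>q\<in>Q. v \<le> q"
  shows "gE Q v \<in> Q" "v \<le> gE Q v" "\<And>q. q \<in> Q \<Longrightarrow> v \<le> q \<Longrightarrow> gE Q v \<le> q"
proof -
  from assms obtain q where "q \<in> Q \<and> v \<le> q" by blast
  then show "gE Q v \<in> Q" "v \<le> gE Q v" unfolding gE_def using assms
    by (metis (mono_tags, lifting) LeastI)+
  show "\<And>q. q \<in> Q \<Longrightarrow> v \<le> q \<Longrightarrow> gE Q v \<le> q"
    unfolding gE_def using assms by (simp add: Least_le)
qed

lemma gE_self: "v \<in> Q \<Longrightarrow> gE Q v = v"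
  using gE_props[of Q v] by force

lemma gE_mono:
  assumes "finite Q"
  shows "mono (gE Q)"
proof (rule monoI)
  fix v w :: nat assume vw: "v \<le> w"
  show "gE Q v \<le> gE Q w"
  proof (cases "\<exists>q\<in>Q. w \<le> q")
    case True
    then have "\<exists>q\<in>Q. v \<le> q" using vw by (meson le_trans)
    then show ?thesis using gE_props[OF True] gE_props(3)[of Q v] vw by force
  next
    case False
    then have w: "gE Q w = w" unfolding gE_def by simp
    show ?thesis
    proof (cases "\<exists>q\<in>Q. v \<le> q")
      case True
      then show ?thesis using gE_props(1)[OF True] False w by force
    next
      case False then show ?thesis using w vw unfolding gE_def by simp
    qed
  qed
qed

definition mrel :: "nat list \<Rightarrow> filling \<Rightarrow> filling \<Rightarrow> bool" where
  "mrel a S T \<longleftrightarrow> (\<forall>x. x \<notin> diag a \<longrightarrow> T x = 0) \<and> entries a T \<subseteq> entries a S \<and>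
     (\<forall>v\<in>entries a S. \<exists>q\<in>entries a T. v \<le> q) \<and>
     (\<forall>x\<in>diag a. T x = gE (entries a T) (S x)) \<and>
     (\<forall>x\<in>diag a. \<forall>y\<in>diag a. T x = T y \<and> S x < S y \<longrightarrow> snd y < snd x)"

definition Qs :: "nat list \<Rightarrow> filling \<Rightarrow> nat set" where
  "Qs a S = {u \<in> entries a S. \<not> desc a S u}"

definition H :: "nat list \<Rightarrow> filling \<Rightarrow> filling" where
  "H a S = (\<lambda>x. if x \<in> diag a then gE (Qs a S) (S x) else 0)"

lemma Lsame:
  assumes u: "u \<in> entries a S"
    and st: "\<And>x. x \<in> diag a \<Longrightarrow> S x = u \<Longrightarrow> T x = t"
    and ts: "\<And>x. x \<in> diag a \<Longrightarrow> T x = t \<Longrightarrow> S x \<le> u"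
    and compat: "\<And>x y. x \<in> diag a \<Longrightarrow> y \<in> diag a \<Longrightarrow> T x = T y \<Longrightarrow> S x < S y \<Longrightarrow> snd y < snd x"
  shows "leftmost_col a T t = leftmost_col a S u"
proof -
  obtain r where r: "(r, leftmost_col a S u) \<in> diag a" "S (r, leftmost_col a S u) = u"
    using leftmost_ex[OF u] by blast
  have Tr: "T (r, leftmost_col a S u) = t" using st r by blast
  then have t: "t \<in> entries a T" using r by (auto simp: entries_iff)
  have le1: "leftmost_col a T t \<le> leftmost_col a S u" using leftmost_le[of r "leftmost_col a S u" a T t] r(1) Tr by blast
  obtain r' where r': "(r', leftmost_col a T t) \<in> diag a" "T (r', leftmost_col a T t) = t"
    using leftmost_ex[OF t] by blast
  have "S (r', leftmost_col a T t) \<le> u" using ts r' by blast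
  then have "leftmost_col a S u \<le> leftmost_col a T t"
  proof (cases "S (r', leftmost_col a T t) = u")
    case True then show ?thesis using leftmost_le[of r' "leftmost_col a T t" a S u] r'(1) by blast
  next
    case False
    then have "S (r', leftmost_col a T t) < S (r, leftmost_col a S u)" using r \<open>_ \<le> u\<close> by simp
    then have "leftmost_col a S u < leftmost_col a T t"
      using compat[OF r'(1) r(1)] r' Tr by simp
    then show ?thesis by simp
  qed
  then show ?thesis using le1 by simp
qed

lemma chain:
  assumes "v \<in> entries a S" "u \<in> entries a S" "v < u"
    "\<forall>w\<in>entries a S. v \<le> w \<and> w < u \<longrightarrow> desc a S w"
    "(r,c) \<in> diag a" "S (r,c) = v" "(r',c') \<in> diag a" "S (r',c') = u"
  shows "c' < c"
  using assms
proof (induction "u - v" arbitrary: v r c rule: less_induct)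
  case less
  have d: "desc a S v" using less.prems by auto
  then have ex: "\<exists>u\<in>entries a S. v < u" by (simp add: desc_def)
  let ?w = "upv a S v"
  have w: "?w \<in> entries a S" "v < ?w" "?w \<le> u" using upv_props[OF ex] less.prems by auto
  have lc: "leftmost_col a S v \<le> c" using leftmost_le less.prems by blast
  have wl: "\<And>r c. (r,c) \<in> diag a \<Longrightarrow> S (r,c) = ?w \<Longrightarrow> c < leftmost_col a S v"
    using d unfolding desc_def by blast
  show ?case
  proof (cases "?w = u")
    case True then show ?thesis using wl[of r' c'] less.prems lc by simp
  next
    case False
    then have wu: "?w < u" using w by simp
    obtain r2 c2 where rc2: "(r2,c2) \<in> diag a" "S (r2,c2) = ?w" using w(1) by (auto simp: entries_iff)
    have "c' < c2"
      by (rule less.hyps[of ?w r2 c2]) (use w wu less.prems rc2 in auto)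
    moreover have "c2 < c" using wl[OF rc2] lc by simp
    ultimately show ?thesis by simp
  qed
qed

lemma H_props:
  assumes S: "S \<in> ASSF a"
  shows "H a S \<in> HSSF a" "mrel a S (H a S)"
proof -
  let ?E = "entries a S" and ?Q = "Qs a S" and ?g = "gE (Qs a S)" and ?T = "H a S"
  have finE: "finite ?E" by (rule finite_entries)
  have finQ: "finite ?Q" using finE unfolding Qs_def by simp
  have QE: "?Q \<subseteq> ?E" unfolding Qs_def by auto
  have Qex: "\<exists>q\<in>?Q. v \<le> q" if v: "v \<in> ?E" for v
  proof -
    have "Max ?E \<in> ?E" using v finE by (intro Max_in) auto
    moreover have "\<not> desc a S (Max ?E)" using finE unfolding desc_def by (auto simp: not_less)
    ultimately show ?thesis using v finE by (intro bexI[of _ "Max ?E"]) (auto simp: Qs_def)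
  qed
  have gdesc: "desc a S w" if "v \<in> ?E" "w \<in> ?E" "v \<le> w" "w < ?g v" for v w
  proof (rule ccontr)
    assume "\<not> desc a S w"
    then have "w \<in> ?Q" using that by (simp add: Qs_def)
    then show False using gE_props(3)[OF Qex[OF that(1)]] that by force
  qed
  have Sent: "S x \<in> ?E" if "x \<in> diag a" for x using that by (simp add: entries_def)
  have compat: "snd y < snd x" if "x \<in> diag a" "y \<in> diag a" "?g (S x) = ?g (S y)" "S x < S y" for x y
  proof -
    obtain r c where x: "x = (r,c)" by (cases x)
    obtain r' c' where y: "y = (r',c')" by (cases y)
    have "c' < c"
    proof (rule chain[of "S x" a S "S y" r c r' c'])
      show "\<forall>w\<in>?E. S x \<le> w \<and> w < S y \<longrightarrow> desc a S w"
        using gdesc[OF Sent[OF that(1)]] gE_props(2)[OF Qex[OF Sent[OF that(2)]]] that(3) by fastforce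
    qed (use that x y Sent in auto)
    then show ?thesis using x y by simp
  qed
  have first: "?g i = i" if "(i,1) \<in> diag a" for i
  proof -
    have "i \<in> ?E" "leftmost_col a S i = 1" using anchored_leftmost[OF S that] by auto
    then have "i \<in> ?Q" by (simp add: Qs_def desc_def)
    then show ?thesis by (rule gE_self)
  qed
  have Tassf: "?T \<in> ASSF a"
  proof (rule coarsen[OF S gE_mono[OF finQ]])
    show "\<And>x. H a S x = (if x \<in> diag a then ?g (S x) else 0)" by (simp add: H_def)
    show "\<And>x. x \<in> diag a \<Longrightarrow> 0 < ?g (S x)"
      using gE_props(2)[OF Qex[OF Sent]] ASSF_D(2)[OF S] by (meson less_le_trans)
  qed (use first compat in auto)
  have ET: "entries a ?T = ?Q"
  proof
    show "entries a ?T \<subseteq> ?Q" using gE_props(1)[OF Qex[OF Sent]] by (auto simp: entries_def H_def)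
    show "?Q \<subseteq> entries a ?T"
    proof
      fix u assume u: "u \<in> ?Q"
      then obtain x where "x \<in> diag a" "S x = u" using QE by (auto simp: entries_def)
      then show "u \<in> entries a ?T" using gE_self[OF u] by (auto simp: entries_def H_def intro!: image_eqI[of _ _ x])
    qed
  qed
  show rel: "mrel a S ?T"
    unfolding mrel_def ET
  proof (intro conjI ballI allI impI QE)
    show "\<And>x. x \<notin> diag a \<Longrightarrow> H a S x = 0" by (simp add: H_def)
    show "\<And>v. v \<in> ?E \<Longrightarrow> \<exists>q\<in>?Q. v \<le> q" by (rule Qex)
    show "\<And>x. x \<in> diag a \<Longrightarrow> H a S x = ?g (S x)" by (simp add: H_def)
    show "\<And>x y. x \<in> diag a \<Longrightarrow> y \<in> diag a \<Longrightarrow> H a S x = H a S y \<and> S x < S y \<Longrightarrow> snd y < snd x"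
      using compat by (auto simp: H_def)
  qed
  have "\<not> desc a ?T v" if v: "v \<in> entries a ?T" for v
  proof
    assume dT: "desc a ?T v"
    have vQ: "v \<in> ?Q" using v ET by simp
    then have vE: "v \<in> ?E" and nd: "\<not> desc a S v" by (auto simp: Qs_def)
    have LL: "leftmost_col a ?T v = leftmost_col a S v"
    proof (rule Lsame[OF vE])
      show "\<And>x. x \<in> diag a \<Longrightarrow> S x = v \<Longrightarrow> H a S x = v" using gE_self[OF vQ] by (simp add: H_def)
      show "\<And>x. x \<in> diag a \<Longrightarrow> H a S x = v \<Longrightarrow> S x \<le> v"
        using gE_props(2)[OF Qex[OF Sent]] by (auto simp: H_def)
      show "\<And>x y. x \<in> diag a \<Longrightarrow> y \<in> diag a \<Longrightarrow> H a S x = H a S y \<Longrightarrow> S x < S y \<Longrightarrow> snd y < snd x"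
        using compat by (auto simp: H_def)
    qed
    have L1: "leftmost_col a S v \<noteq> 1" using dT LL by (simp add: desc_def)
    have exT: "\<exists>u\<in>entries a ?T. v < u" using dT by (simp add: desc_def)
    then have exS: "\<exists>u\<in>?E. v < u" using ET QE by blast
    obtain r c where rc: "(r,c) \<in> diag a" "S (r,c) = upv a S v" "c \<ge> leftmost_col a S v"
      using nd vE L1 exS unfolding desc_def by (auto simp: not_less)
    let ?w = "upv a S v"
    have w: "?w \<in> ?E" "v < ?w" "\<And>u. u \<in> ?E \<Longrightarrow> v < u \<Longrightarrow> ?w \<le> u" using upv_props[OF exS] by auto
    have eq: "?g ?w = upv a ?T v"
    proof (rule antisym)
      have "upv a ?T v \<in> ?Q" "v < upv a ?T v" using upv_props[OF exT] ET by auto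
      then show "?g ?w \<le> upv a ?T v" using gE_props(3)[OF Qex[OF w(1)]] w(3) QE by blast
      have "?g ?w \<in> entries a ?T" "v < ?g ?w" using gE_props(1,2)[OF Qex[OF w(1)]] ET w(2) by auto
      then show "upv a ?T v \<le> ?g ?w" using upv_props(3)[OF exT] by blast
    qed
    have "?T (r,c) = upv a ?T v" using rc eq by (simp add: H_def)
    then have "c < leftmost_col a ?T v" using dT rc(1) unfolding desc_def by blast
    then show False using LL rc(3) by simp
  qed
  then show "?T \<in> HSSF a" using Tassf PH_iff[OF Tassf] by (simp add: HSSF_def)
qed


lemma mrelD:
  assumes "mrel a S T"
  shows "\<And>x. x \<notin> diag a \<Longrightarrow> T x = 0" "entries a T \<subseteq> entries a S"
    "\<And>v. v\<in>entries a S \<Longrightarrow> \<exists>q\<in>entries a T. v \<le> q"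
    "\<And>x. x\<in>diag a \<Longrightarrow> T x = gE (entries a T) (S x)"
    "\<And>x y. x\<in>diag a \<Longrightarrow> y\<in>diag a \<Longrightarrow> T x = T y \<Longrightarrow> S x < S y \<Longrightarrow> snd y < snd x"
  using assms unfolding mrel_def by blast+

lemma H_unique:
  assumes S: "S \<in> ASSF a" and T: "T \<in> HSSF a" and rel: "mrel a S T"
  shows "T = H a S"
proof -
  have TA: "T \<in> ASSF a" and ph: "particle_highest a T" using T by (auto simp: HSSF_def)
  let ?ES = "entries a S" and ?ET = "entries a T"
  let ?g = "gE ?ET"
  note R = mrelD[OF rel]
  have finT: "finite ?ET" by (rule finite_entries)
  have mg: "\<And>x y. x \<le> y \<Longrightarrow> ?g x \<le> ?g y" using gE_mono[OF finT] by (simp add: mono_def)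
  have Sent: "S x \<in> ?ES" if "x \<in> diag a" for x using that by (simp add: entries_def)
  have dir1: "desc a S u" if u: "u \<in> ?ES" "u \<notin> ?ET" for u
  proof -
    have gu: "?g u \<in> ?ET" "u \<le> ?g u" using gE_props[OF R(3)[OF u(1)]] by auto
    have ugt: "u < ?g u" using gu u by (metis le_neq_implies_less)
    have ex: "\<exists>w\<in>?ES. u < w" using gu ugt R(2) by blast
    let ?w = "upv a S u"
    have w: "?w \<in> ?ES" "u < ?w" "?w \<le> ?g u" using upv_props[OF ex] gu ugt R(2) by auto
    have gw: "?g ?w = ?g u"
      using gE_props(3)[OF R(3)[OF w(1)] gu(1) w(3)] mg[of u ?w] w(2) by simp
    have L1: "leftmost_col a S u \<noteq> 1"
    proof
      assume "leftmost_col a S u = 1"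
      then have "(u,1) \<in> diag a" using leftmost_one[OF S u(1)] by simp
      then have "u \<in> ?ET" using anchored_leftmost(1)[OF TA] by simp
      then show False using u by simp
    qed
    obtain r0 where r0: "(r0, leftmost_col a S u) \<in> diag a" "S (r0, leftmost_col a S u) = u"
      using leftmost_ex[OF u(1)] by blast
    have "c < leftmost_col a S u" if rc: "(r,c) \<in> diag a" "S (r,c) = ?w" for r c
    proof -
      have "T (r,c) = T (r0, leftmost_col a S u)" using R(4)[OF rc(1)] R(4)[OF r0(1)] rc r0 gw by simp
      then show ?thesis using R(5)[OF r0(1) rc(1)] rc r0 w(2) by simp
    qed
    then show ?thesis using u(1) L1 ex unfolding desc_def by blast
  qed
  have dir2: "\<not> desc a S u" if u: "u \<in> ?ET" for u
  proof
    assume d: "desc a S u"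
    have uS: "u \<in> ?ES" using u R(2) by blast
    have LL: "leftmost_col a T u = leftmost_col a S u"
    proof (rule Lsame[OF uS])
      show "\<And>x. x \<in> diag a \<Longrightarrow> S x = u \<Longrightarrow> T x = u" using R(4) gE_self[OF u] by simp
      show "\<And>x. x \<in> diag a \<Longrightarrow> T x = u \<Longrightarrow> S x \<le> u" using R(4) gE_props(2)[OF R(3)[OF Sent]] by metis
      show "\<And>x y. x \<in> diag a \<Longrightarrow> y \<in> diag a \<Longrightarrow> T x = T y \<Longrightarrow> S x < S y \<Longrightarrow> snd y < snd x" by (rule R(5))
    qed
    have L1: "leftmost_col a S u \<noteq> 1" and exS: "\<exists>w\<in>?ES. u < w" using d by (auto simp: desc_def)
    let ?w = "upv a S u"
    have w: "?w \<in> ?ES" "u < ?w" "\<And>v. v \<in> ?ES \<Longrightarrow> u < v \<Longrightarrow> ?w \<le> v" using upv_props[OF exS] by auto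
    have wl: "\<And>r c. (r,c) \<in> diag a \<Longrightarrow> S (r,c) = ?w \<Longrightarrow> c < leftmost_col a S u"
      using d unfolding desc_def by blast
    have gw: "?g ?w \<in> ?ET" "?w \<le> ?g ?w" using gE_props[OF R(3)[OF w(1)]] by auto
    have exT: "\<exists>v\<in>?ET. u < v" using gw w(2) by (meson less_le_trans)
    have ndT: "\<not> desc a T u" using PH_iff[OF TA] ph u by blast
    then obtain r c where rc: "(r,c) \<in> diag a" "T (r,c) = upv a T u" "c \<ge> leftmost_col a T u"
      using L1 LL exT u unfolding desc_def by (auto simp: not_less)
    have eq: "upv a T u = ?g ?w"
    proof (rule antisym)
      show "upv a T u \<le> ?g ?w" using upv_props(3)[OF exT] gw w(2) by (meson less_le_trans)
      have "upv a T u \<in> ?ES" "u < upv a T u" using upv_props[OF exT] R(2) by auto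
      then show "?g ?w \<le> upv a T u" using gE_props(3)[OF R(3)[OF w(1)]] upv_props(1)[OF exT] w(3) by blast
    qed
    let ?s = "S (r,c)"
    have gs: "?g ?s = ?g ?w" using R(4)[OF rc(1)] rc(2) eq by simp
    have "u < ?s"
    proof (rule ccontr)
      assume "\<not> u < ?s"
      then have "?g ?s \<le> ?g u" using mg by simp
      then show False using gs gE_self[OF u] gw(2) w(2) by simp
    qed
    then have sw: "?w \<le> ?s" using w(3) Sent[OF rc(1)] by blast
    show False
    proof (cases "?s = ?w")
      case True then show False using wl[OF rc(1)] rc(3) LL by simp
    next
      case False
      obtain r2 c2 where rc2: "(r2,c2) \<in> diag a" "S (r2,c2) = ?w" using w(1) by (auto simp: entries_iff)
      have "T (r2,c2) = T (r,c)" using R(4)[OF rc2(1)] R(4)[OF rc(1)] rc2 gs by simp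
      then have "c < c2" using R(5)[OF rc2(1) rc(1)] rc2 sw False by simp
      then show False using wl[OF rc2] rc(3) LL by simp
    qed
  qed
  have EQ: "?ET = Qs a S"
    unfolding Qs_def using dir1 dir2 R(2) by blast
  show ?thesis
  proof
    fix x show "T x = H a S x"
      using R(1)[of x] R(4)[of x] EQ by (simp add: H_def)
  qed
qed


definition cnt :: "nat list \<Rightarrow> filling \<Rightarrow> nat \<Rightarrow> nat" where
  "cnt a S u = card {x \<in> diag a. S x = u}"

lemma wt_length[simp]: "length (wt a S) = length a"
  by (simp add: wt_def del: upt_Suc)

lemma wt_nth: "k < length a \<Longrightarrow> wt a S ! k = cnt a S (Suc k)"
  by (simp add: wt_def cnt_def del: upt_Suc)

lemma wt_eqI:
  assumes "\<And>x. x \<in> diag a \<Longrightarrow> S x = T x"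
  shows "wt a S = wt a T"
proof -
  have "\<And>i. {x \<in> diag a. S x = i} = {x \<in> diag a. T x = i}" using assms by auto
  then show ?thesis by (simp add: wt_def)
qed

lemma cnt_pos: "u \<in> entries a S \<Longrightarrow> cnt a S u > 0"
  unfolding cnt_def using finite_diag by (auto simp: entries_def card_gt_0_iff)

lemma cnt_zero: "u \<notin> entries a S \<Longrightarrow> cnt a S u = 0"
proof -
  assume "u \<notin> entries a S"
  then have "{x \<in> diag a. S x = u} = {}" by (auto simp: entries_def)
  then show ?thesis by (metis cnt_def card.empty)
qed

lemma cnt_zero_iff: "cnt a S u = 0 \<longleftrightarrow> u \<notin> entries a S"
  using cnt_pos cnt_zero by fastforce

lemma cnt_pair:
  "cnt a S v + cnt a S (Suc v) = card {x \<in> diag a. S x \<in> {v, Suc v}}"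
proof -
  have "{x \<in> diag a. S x \<in> {v, Suc v}} = {x \<in> diag a. S x = v} \<union> {x \<in> diag a. S x = Suc v}" by auto
  then show ?thesis unfolding cnt_def using finite_diag
    by (simp add: card_Un_disjoint disjoint_iff)
qed

lemma wt_update:
  assumes v: "1 \<le> v" "v < length a"
    and same: "\<And>x. x \<in> diag a \<Longrightarrow> S x \<notin> {v, Suc v} \<Longrightarrow> S' x = S x"
    and pair: "\<And>x. x \<in> diag a \<Longrightarrow> S x \<in> {v, Suc v} \<longleftrightarrow> S' x \<in> {v, Suc v}"
  shows "wt a S' = (wt a S)[v - 1 := cnt a S' v, v := cnt a S' (Suc v)]"
    and "cnt a S v + cnt a S (Suc v) = cnt a S' v + cnt a S' (Suc v)"
proof -
  show "cnt a S v + cnt a S (Suc v) = cnt a S' v + cnt a S' (Suc v)"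
    unfolding cnt_pair using pair by (metis (lifting))
  show "wt a S' = (wt a S)[v - 1 := cnt a S' v, v := cnt a S' (Suc v)]"
  proof (rule nth_equalityI)
    show "length (wt a S') = length ((wt a S)[v - 1 := cnt a S' v, v := cnt a S' (Suc v)])" by simp
    fix k assume "k < length (wt a S')"
    then have k: "k < length a" by simp
    show "wt a S' ! k = (wt a S)[v - 1 := cnt a S' v, v := cnt a S' (Suc v)] ! k"
    proof (cases "k = v - 1 \<or> k = v")
      case True then show ?thesis using v k by (auto simp: wt_nth)
    next
      case False
      then have "Suc k \<noteq> v" "Suc k \<noteq> Suc v" using v by auto
      then have "{x \<in> diag a. S' x = Suc k} = {x \<in> diag a. S x = Suc k}"
        using same pair by (metis insert_iff singleton_iff)
      then show ?thesis using False k by (simp add: wt_nth cnt_def)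
    qed
  qed
qed


lemma slide_of_rel:
  assumes S: "S \<in> ASSF a" and T: "T \<in> ASSF a" and rel: "mrel a S T"
  shows "fixed_slide (wt a T) (wt a S)"
  using S rel
proof (induction "\<Sum>x\<in>diag a. T x - S x" arbitrary: S rule: less_induct)
  case less
  note S = less.prems(1) and rel = less.prems(2)
  note R = mrelD[OF rel]
  let ?ES = "entries a S" and ?ET = "entries a T"
  let ?g = "gE ?ET"
  have finT: "finite ?ET" by (rule finite_entries)
  have mg: "\<And>x y. x \<le> y \<Longrightarrow> ?g x \<le> ?g y" using gE_mono[OF finT] by (simp add: mono_def)
  have Sent: "S x \<in> ?ES" if "x \<in> diag a" for x using that by (simp add: entries_def)
  have TgeS: "S x \<le> T x" if "x \<in> diag a" for x
    using gE_props(2)[OF R(3)[OF Sent[OF that]]] R(4)[OF that] by simp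
  show ?case
  proof (cases "\<forall>x\<in>diag a. S x = T x")
    case True
    then have "wt a T = wt a S" using wt_eqI[of a T S] by simp
    then show ?thesis using fixed_slide.refl[of "wt a T"] by simp
  next
    case False
    then obtain x0 where x0: "x0 \<in> diag a" "S x0 \<noteq> T x0" by blast
    define v where "v = S x0"
    have vS: "v \<in> ?ES" using Sent[OF x0(1)] v_def by simp
    have vT: "v \<notin> ?ET" using x0 R(4)[OF x0(1)] gE_self[of v ?ET] v_def by auto
    have gv: "?g v \<in> ?ET" "v \<le> ?g v" using gE_props[OF R(3)[OF vS]] by auto
    have vlt: "v < ?g v" using gv vT by (metis le_neq_implies_less)
    have ex1: "\<exists>q\<in>?ET. Suc v \<le> q" using gv(1) vlt by (intro bexI[of _ "?g v"]) auto
    have gv1: "?g (Suc v) = ?g v"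
    proof (rule antisym)
      show "?g (Suc v) \<le> ?g v" using gE_props(3)[OF ex1 gv(1)] vlt by simp
      show "?g v \<le> ?g (Suc v)" using mg by simp
    qed
    have vpos: "1 \<le> v" using ASSF_D(2)[OF S x0(1)] v_def by simp
    have vn: "Suc v \<le> length a"
    proof -
      obtain y where "y \<in> diag a" "T y = ?g v" using gv(1) by (auto simp: entries_def)
      then show ?thesis using ASSF_le_n[OF T, of y] vlt by simp
    qed
    define f where "f = (\<lambda>u::nat. if u = v then Suc v else u)"
    define S' where "S' = (\<lambda>x. if x \<in> diag a \<and> S x = v then Suc v else S x)"
    have mf: "mono f" unfolding f_def by (rule monoI) auto
    have S'S: "S' x = (if x \<in> diag a then f (S x) else 0)" for x
      using ASSF_D(1)[OF S, of x] by (auto simp: S'_def f_def)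
    have compS: "snd y < snd x" if "x \<in> diag a" "y \<in> diag a" "S x = v" "S y = Suc v" for x y
    proof -
      have "T x = T y" using R(4) that gv1 by simp
      then show ?thesis using R(5)[OF that(1,2)] that by simp
    qed
    have S'A: "S' \<in> ASSF a"
    proof (rule coarsen[OF S mf S'S])
      show "\<And>x. x \<in> diag a \<Longrightarrow> 0 < f (S x)" using ASSF_D(2)[OF S] by (simp add: f_def)
      show "\<And>i. (i, 1) \<in> diag a \<Longrightarrow> f i = i"
        using anchored_leftmost(1)[OF T] vT by (auto simp: f_def)
      show "\<And>x y. x \<in> diag a \<Longrightarrow> y \<in> diag a \<Longrightarrow> f (S x) = f (S y) \<Longrightarrow> S x < S y \<Longrightarrow> snd y < snd x"
        using compS by (auto simp: f_def split: if_splits)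
    qed
    have rel': "mrel a S' T"
      unfolding mrel_def
    proof (intro conjI ballI allI impI)
      show "\<And>x. x \<notin> diag a \<Longrightarrow> T x = 0" by (rule R(1))
      show "?ET \<subseteq> entries a S'"
      proof
        fix q assume q: "q \<in> ?ET"
        then have "q \<in> ?ES" using R(2) by blast
        then obtain x where "x \<in> diag a" "S x = q" unfolding entries_def by blast
        moreover have "q \<noteq> v" using q vT by blast
        ultimately have "S' x = q" "x \<in> diag a" by (auto simp: S'_def)
        then show "q \<in> entries a S'" by (auto simp: entries_def)
      qed
      show "\<exists>q\<in>?ET. u \<le> q" if u: "u \<in> entries a S'" for u
      proof -
        obtain x where x: "x \<in> diag a" "u = S' x" using u unfolding entries_def by blast
        show ?thesis
        proof (cases "S x = v")
          case True then show ?thesis using x gv vlt by (auto simp: S'_def intro!: bexI[of _ "?g v"])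
        next
          case False then show ?thesis using x R(3)[OF Sent[OF x(1)]] by (simp add: S'_def)
        qed
      qed
      show "T x = ?g (S' x)" if "x \<in> diag a" for x
        using R(4)[OF that] gv1 by (simp add: S'_def)
      show "snd y < snd x" if "x \<in> diag a" "y \<in> diag a" "T x = T y \<and> S' x < S' y" for x y
        using R(5)[OF that(1,2)] that by (auto simp: S'_def split: if_splits)
    qed
    have lt: "(\<Sum>x\<in>diag a. T x - S' x) < (\<Sum>x\<in>diag a. T x - S x)"
    proof (rule sum_strict_mono_ex1[OF finite_diag])
      show "\<forall>x\<in>diag a. T x - S' x \<le> T x - S x" by (auto simp: S'_def)
      have "T x0 = ?g v" using R(4)[OF x0(1)] v_def by simp
      then show "\<exists>x\<in>diag a. T x - S' x < T x - S x"
        using x0(1) vlt v_def by (intro bexI[of _ x0]) (auto simp: S'_def)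
    qed
    have IH: "fixed_slide (wt a T) (wt a S')" using less.hyps[OF lt S'A rel'] .
    have h1: "\<And>x. x \<in> diag a \<Longrightarrow> S' x \<notin> {v, Suc v} \<Longrightarrow> S x = S' x"
      by (auto simp: S'_def)
    have h2: "\<And>x. x \<in> diag a \<Longrightarrow> S' x \<in> {v, Suc v} \<longleftrightarrow> S x \<in> {v, Suc v}"
      by (auto simp: S'_def)
    have vn': "v < length a" using vn by simp
    note WU = wt_update[of v a S' S, OF vpos vn' h1 h2]
    have upd: "wt a S = (wt a S')[v - 1 := cnt a S v, v := cnt a S (Suc v)]" by (rule WU(1))
    have sums: "cnt a S' v + cnt a S' (Suc v) = cnt a S v + cnt a S (Suc v)" by (rule WU(2))
    have c0: "cnt a S' v = 0"
    proof -
      have "{x \<in> diag a. S' x = v} = {}" by (auto simp: S'_def)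
      then show ?thesis by (metis cnt_def card.empty)
    qed
    have "fixed_slide (wt a T) ((wt a S')[v - 1 := cnt a S v, Suc (v - 1) := cnt a S (Suc v)])"
    proof (rule fixed_slide.move[OF IH])
      show "Suc (v - 1) < length (wt a S')" using vpos vn by simp
      show "wt a S' ! (v - 1) = 0" using c0 vpos vn by (simp add: wt_nth)
      show "wt a S' ! Suc (v - 1) = cnt a S v + cnt a S (Suc v)"
        using sums c0 vpos vn by (simp add: wt_nth)
      show "cnt a S v + cnt a S (Suc v) = cnt a S v + cnt a S (Suc v)" ..
      show "wt a T ! Suc (v - 1) \<noteq> 0 \<longrightarrow> 0 < cnt a S (Suc v)"
      proof
        assume "wt a T ! Suc (v - 1) \<noteq> 0"
        then have "cnt a T (Suc v) \<noteq> 0" using vpos vn by (simp add: wt_nth)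
        then have "Suc v \<in> ?ET" using cnt_zero by metis
        then show "0 < cnt a S (Suc v)" using R(2) cnt_pos by blast
      qed
    qed
    then show ?thesis using upd vpos by simp
  qed
qed



lemma card_fiber_sum:
  assumes "finite U"
  shows "card {y \<in> diag a. S y \<in> U} = (\<Sum>u\<in>U. cnt a S u)"
  using assms
proof (induction U rule: finite_induct)
  case empty then show ?case by simp
next
  case (insert u U)
  have "{y \<in> diag a. S y \<in> insert u U} = {y \<in> diag a. S y = u} \<union> {y \<in> diag a. S y \<in> U}" by auto
  moreover have "{y \<in> diag a. S y = u} \<inter> {y \<in> diag a. S y \<in> U} = {}" using insert by auto
  ultimately have "card {y \<in> diag a. S y \<in> insert u U} = cnt a S u + card {y \<in> diag a. S y \<in> U}"
    unfolding cnt_def using finite_diag by (simp add: card_Un_disjoint)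
  then show ?case using insert by simp
qed

lemma cnt_eq_of_wt:
  assumes S1: "S1 \<in> ASSF a" and S2: "S2 \<in> ASSF a" and w: "wt a S1 = wt a S2"
  shows "cnt a S1 u = cnt a S2 u"
proof (cases "1 \<le> u \<and> u \<le> length a")
  case True
  then have "u - 1 < length a" "Suc (u - 1) = u" by auto
  then have "wt a S1 ! (u - 1) = cnt a S1 u" "wt a S2 ! (u - 1) = cnt a S2 u" using wt_nth by metis+
  then show ?thesis using w by simp
next
  case False
  have "{x \<in> diag a. S1 x = u} = {}" "{x \<in> diag a. S2 x = u} = {}"
    using False ASSF_D(2)[OF S1] ASSF_D(2)[OF S2] ASSF_le_n[OF S1] ASSF_le_n[OF S2] by fastforce+
  then show ?thesis unfolding cnt_def by metis
qed

lemma inj_half: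
  assumes S1: "S1 \<in> ASSF a" and S2: "S2 \<in> ASSF a" and w: "wt a S1 = wt a S2"
    and r1: "mrel a S1 T" and r2: "mrel a S2 T" and x: "x \<in> diag a"
  shows "\<not> S1 x < S2 x"
proof
  assume lt: "S1 x < S2 x"
  note R1 = mrelD[OF r1] and R2 = mrelD[OF r2]
  let ?q = "T x" and ?v = "S1 x"
  let ?U = "{u. u \<le> ?v \<and> gE (entries a T) u = ?q}"
  define A1 where "A1 = {y \<in> diag a. T y = ?q \<and> S1 y \<le> ?v}"
  define A2 where "A2 = {y \<in> diag a. T y = ?q \<and> S2 y \<le> ?v}"
  have finU: "finite ?U" by (rule finite_subset[of _ "{..?v}"]) auto
  have "A1 = {y \<in> diag a. S1 y \<in> ?U}" unfolding A1_def using R1(4) by auto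
  moreover have "A2 = {y \<in> diag a. S2 y \<in> ?U}" unfolding A2_def using R2(4) by auto
  ultimately have "card A1 = card A2"
    using card_fiber_sum[OF finU, of a S1] card_fiber_sum[OF finU, of a S2]
      cnt_eq_of_wt[OF S1 S2 w] by simp
  moreover have sub: "A2 \<subseteq> A1"
  proof
    fix z assume "z \<in> A2"
    then have z: "z \<in> diag a" "T z = ?q" "S2 z \<le> ?v" unfolding A2_def by auto
    show "z \<in> A1"
    proof (cases "snd x \<le> snd z")
      case True
      have "\<not> S1 x < S1 z" using R1(5)[OF x z(1)] z True by force
      then show ?thesis using z unfolding A1_def by simp
    next
      case False
      have "snd x < snd z" using R2(5)[OF z(1) x] z lt by simp
      then show ?thesis using False by simp
    qed
  qed
  moreover have "x \<in> A1" "x \<notin> A2" using x lt unfolding A1_def A2_def by auto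
  moreover have "finite A1" unfolding A1_def using finite_diag by simp
  ultimately show False using psubset_card_mono[of A1 A2] by auto
qed

lemma inj_rel:
  assumes S1: "S1 \<in> ASSF a" and S2: "S2 \<in> ASSF a" and w: "wt a S1 = wt a S2"
    and r1: "mrel a S1 T" and r2: "mrel a S2 T"
  shows "S1 = S2"
proof
  fix x show "S1 x = S2 x"
  proof (cases "x \<in> diag a")
    case True
    then show ?thesis using inj_half[OF S1 S2 w r1 r2 True] inj_half[OF S2 S1 w[symmetric] r2 r1 True] by simp
  next
    case False then show ?thesis using ASSF_D(1)[OF S1] ASSF_D(1)[OF S2] by simp
  qed
qed


lemma right_closed_subset:
  fixes Y :: "(nat \<times> nat) set"
  assumes fin: "finite Y" and inj: "inj_on snd Y" and i: "i \<le> card Y"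
  shows "\<exists>X\<subseteq>Y. card X = i \<and> (\<forall>x\<in>X. \<forall>y\<in>Y. snd x \<le> snd y \<longrightarrow> y \<in> X)"
  using i
proof (induction i)
  case 0 then show ?case by (intro exI[of _ "{}"]) auto
next
  case (Suc i)
  then obtain X where X: "X \<subseteq> Y" "card X = i" "\<forall>x\<in>X. \<forall>y\<in>Y. snd x \<le> snd y \<longrightarrow> y \<in> X" by auto
  have finX: "finite X" using X(1) fin finite_subset by blast
  have "Y - X \<noteq> {}"
  proof
    assume "Y - X = {}"
    then have "Y = X" using X(1) by blast
    then show False using X(2) Suc.prems by simp
  qed
  define m where "m = Max (snd ` (Y - X))"
  have "m \<in> snd ` (Y - X)" unfolding m_def using fin \<open>Y - X \<noteq> {}\<close> by (intro Max_in) auto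
  then obtain y0 where y0: "y0 \<in> Y - X" "snd y0 = m" by auto
  have mx: "\<And>y. y \<in> Y - X \<Longrightarrow> snd y \<le> m" unfolding m_def using fin by (intro Max_ge) auto
  show ?case
  proof (intro exI[of _ "insert y0 X"] conjI ballI impI)
    show "insert y0 X \<subseteq> Y" using X(1) y0 by auto
    show "card (insert y0 X) = Suc i" using finX y0 X(2) by simp
    fix x y assume x: "x \<in> insert y0 X" and y: "y \<in> Y" and le: "snd x \<le> snd y"
    show "y \<in> insert y0 X"
    proof (cases "x \<in> X")
      case True then show ?thesis using X(3) y le by blast
    next
      case False
      then have "x = y0" using x by simp
      show ?thesis
      proof (cases "y \<in> X")
        case False
        then have "snd y \<le> m" using mx y by simp
        then have "snd y = snd y0" using le \<open>x = y0\<close> y0 by simp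
        then have "y = y0" using inj y y0 by (auto dest: inj_onD)
        then show ?thesis by simp
      qed simp
    qed
  qed
qed

lemma gE_skip:
  assumes "v \<notin> Q"
  shows "gE Q v = gE Q (Suc v) \<or> \<not> (\<exists>q\<in>Q. Suc v \<le> q)"
proof -
  have eq: "(\<lambda>q. q \<in> Q \<and> v \<le> q) = (\<lambda>q. q \<in> Q \<and> Suc v \<le> q)"
    using assms by (auto simp: le_eq_less_or_eq intro!: ext)
  then have "(\<exists>q\<in>Q. v \<le> q) = (\<exists>q\<in>Q. Suc v \<le> q)" by metis
  then show ?thesis unfolding gE_def eq by auto
qed

lemma split_exists:
  assumes T: "T \<in> ASSF a" and fs: "fixed_slide (wt a T) c"
  shows "\<exists>S\<in>ASSF a. mrel a S T \<and> wt a S = c"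
  using fs
proof (induction rule: fixed_slide.induct)
  case refl
  have "mrel a T T"
    unfolding mrel_def
  proof (intro conjI ballI allI impI subset_refl)
    show "\<And>x. x \<notin> diag a \<Longrightarrow> T x = 0" using ASSF_D(1)[OF T] .
    show "\<And>v. v \<in> entries a T \<Longrightarrow> \<exists>q\<in>entries a T. v \<le> q" by blast
    show "\<And>x. x \<in> diag a \<Longrightarrow> T x = gE (entries a T) (T x)"
      by (rule gE_self[symmetric]) (simp add: entries_def)
    show "\<And>x y. x \<in> diag a \<Longrightarrow> y \<in> diag a \<Longrightarrow> T x = T y \<and> T x < T y \<Longrightarrow> snd y < snd x" by simp
  qed
  then show ?case using T by blast
next
  case (move c p k i j)
  from move.IH obtain S where S: "S \<in> ASSF a" and rel: "mrel a S T" and wS: "wt a S = c" by blast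
  note R = mrelD[OF rel]
  let ?ES = "entries a S" and ?ET = "entries a T"
  define v where "v = Suc p"
  have lenc: "length c = length a" using wS by auto
  have vn: "v < length a" "1 \<le> v" using move.hyps(2) lenc v_def by auto
  have cv: "cnt a S v = 0" using move.hyps(3) wS wt_nth[of p a S] vn v_def by simp
  have cv1: "cnt a S (Suc v) = k" using move.hyps(4) wS wt_nth[of "Suc p" a S] vn v_def lenc move.hyps(2) by simp
  have vnS: "v \<notin> ?ES" using cv cnt_pos by (metis less_irrefl)
  have vnT: "v \<notin> ?ET" using vnS R(2) by blast
  define Y where "Y = {x \<in> diag a. S x = Suc v}"
  have cardY: "card Y = k" using cv1 by (simp add: cnt_def Y_def)
  have finY: "finite Y" unfolding Y_def using finite_diag by simp
  have injY: "inj_on snd Y"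
    by (rule inj_onI) (use ASSF_col_inj[OF S] in \<open>auto simp: Y_def\<close>)
  have ik: "i \<le> card Y" using cardY move.hyps(5) by simp
  obtain X where X: "X \<subseteq> Y" "card X = i" and rc: "\<And>x y. x \<in> X \<Longrightarrow> y \<in> Y \<Longrightarrow> snd x \<le> snd y \<Longrightarrow> y \<in> X"
    using right_closed_subset[OF finY injY ik] by blast
  have jpos: "j > 0" if "Suc v \<in> ?ET"
  proof -
    have "cnt a T (Suc v) \<noteq> 0" using cnt_pos[OF that] by simp
    then have "wt a T ! Suc p \<noteq> 0" using wt_nth[of "Suc p" a T] vn v_def by simp
    then show ?thesis using move.hyps(6) by simp
  qed
  have XneY: "\<exists>y\<in>Y. y \<notin> X" if "Suc v \<in> ?ET"
  proof (rule ccontr)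
    assume "\<not> (\<exists>y\<in>Y. y \<notin> X)"
    then have "Y = X" using X(1) by blast
    then show False using jpos[OF that] X(2) cardY move.hyps(5) by simp
  qed
  define S' where "S' = (\<lambda>x. if x \<in> X then v else S x)"
  define f where "f = (\<lambda>u::nat. if u = v then Suc v else u)"
  have mf: "mono f" unfolding f_def by (rule monoI) auto
  have XD: "x \<in> diag a" "S x = Suc v" if "x \<in> X" for x using that X(1) by (auto simp: Y_def)
  have Sv: "S x \<noteq> v" if "x \<in> diag a" for x using vnS that by (auto simp: entries_def)
  have S'A: "S' \<in> ASSF a"
  proof (rule refine[OF S mf])
    show "\<And>x. x \<in> diag a \<Longrightarrow> S x = f (S' x)" using XD Sv by (auto simp: S'_def f_def)
    show "\<And>x. x \<notin> diag a \<Longrightarrow> S' x = 0" using XD ASSF_D(1)[OF S] by (auto simp: S'_def)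
    show "\<And>x. x \<in> diag a \<Longrightarrow> S' x > 0" using ASSF_D(2)[OF S] vn by (auto simp: S'_def)
    show "S' (i', 1) = i'" if "(i', 1) \<in> diag a" for i'
    proof (cases "(i', 1) \<in> X")
      case True
      then have "S (i', 1) = Suc v" using XD by blast
      then have "i' = Suc v" using ASSF_D(6)[OF S that] by simp
      then have "Suc v \<in> ?ET" using anchored_leftmost(1)[OF T] that by simp
      then obtain y where "y \<in> Y" "y \<notin> X" using XneY by blast
      moreover have "snd (i', 1) \<le> snd y" using \<open>y \<in> Y\<close> by (auto simp: Y_def diag_def)
      ultimately show ?thesis using rc[OF True] by blast
    next
      case False then show ?thesis using ASSF_D(6)[OF S that] by (simp add: S'_def)
    qed
    show "\<And>x y. x \<in> diag a \<Longrightarrow> y \<in> diag a \<Longrightarrow> f (S' x) = f (S' y) \<Longrightarrow> S' x < S' y \<Longrightarrow> snd y < snd x"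
    proof -
      fix x y assume x: "x \<in> diag a" and y: "y \<in> diag a" and e: "f (S' x) = f (S' y)" and l: "S' x < S' y"
      have "S' x = v" "S' y = Suc v" using e l by (auto simp: f_def split: if_splits)
      then have "x \<in> X" "y \<notin> X" "y \<in> Y" using Sv[OF x] vn y by (auto simp: S'_def Y_def split: if_splits)
      then show "snd y < snd x" using rc by (meson not_le)
    qed
  qed
  have gEv: "gE ?ET v = gE ?ET (Suc v)" if ne: "X \<noteq> {}"
  proof -
    obtain x where "x \<in> X" using ne by blast
    then have "Suc v \<in> ?ES" using XD[of x] unfolding entries_def by (metis image_eqI)
    then have "\<exists>q\<in>?ET. Suc v \<le> q" using R(3) by blast
    then show ?thesis using gE_skip[OF vnT] by blast
  qed
  have rel': "mrel a S' T"
    unfolding mrel_def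
  proof (intro conjI ballI allI impI)
    show "\<And>x. x \<notin> diag a \<Longrightarrow> T x = 0" by (rule R(1))
    show "?ET \<subseteq> entries a S'"
    proof
      fix q assume q: "q \<in> ?ET"
      then have "q \<in> ?ES" using R(2) by blast
      then obtain x where x: "x \<in> diag a" "S x = q" unfolding entries_def by blast
      show "q \<in> entries a S'"
      proof (cases "x \<in> X")
        case False
        then have "S' x = q" using x by (simp add: S'_def)
        then show ?thesis using x(1) unfolding entries_def by (metis image_eqI)
      next
        case True
        then have "q = Suc v" using XD x by simp
        then obtain y where y: "y \<in> Y" "y \<notin> X" using XneY q by blast
        then have "S' y = q" "y \<in> diag a" using \<open>q = Suc v\<close> by (auto simp: S'_def Y_def)
        then show ?thesis unfolding entries_def by (metis image_eqI)
      qed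
    qed
    show "\<exists>q\<in>?ET. u \<le> q" if u: "u \<in> entries a S'" for u
    proof -
      obtain x where x: "x \<in> diag a" "u = S' x" using u unfolding entries_def by blast
      show ?thesis
      proof (cases "x \<in> X")
        case True
        then have "S x = Suc v" "u = v" using XD x by (auto simp: S'_def)
        then obtain q where "q \<in> ?ET" "Suc v \<le> q" using R(3)[of "Suc v"] x(1) unfolding entries_def by (metis image_eqI)
        then show ?thesis using \<open>u = v\<close> by (intro bexI[of _ q]) auto
      next
        case False
        then show ?thesis using x R(3)[of "S x"] unfolding entries_def by (simp add: S'_def)
      qed
    qed
    show "T x = gE ?ET (S' x)" if x: "x \<in> diag a" for x
    proof (cases "x \<in> X")
      case True
      then have "X \<noteq> {}" by blast
      then show ?thesis using gEv R(4)[OF x] XD[OF True] True by (simp add: S'_def)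
    next
      case False then show ?thesis using R(4)[OF x] by (simp add: S'_def)
    qed
    show "snd y < snd x" if x: "x \<in> diag a" and y: "y \<in> diag a" and h: "T x = T y \<and> S' x < S' y" for x y
    proof (cases "x \<in> X")
      case xX: True
      then have Sx: "S x = Suc v" "S' x = v" using XD by (auto simp: S'_def)
      show ?thesis
      proof (cases "y \<in> X")
        case True then show ?thesis using h xX by (simp add: S'_def)
      next
        case False
        then have Sy: "S' y = S y" by (simp add: S'_def)
        show ?thesis
        proof (cases "S y = Suc v")
          case True
          then have "y \<in> Y" using y by (simp add: Y_def)
          then show ?thesis using rc[OF xX] False by (meson not_le)
        next
          case False
          then have "S x < S y" using Sx Sy h Sv[OF y] by simp
          then show ?thesis using R(5)[OF x y] h by simp
        qed
      qed
    next
      case xX: False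
      show ?thesis
      proof (cases "y \<in> X")
        case True
        then have "S y = Suc v" "S' y = v" using XD by (auto simp: S'_def)
        then have "S x < S y" using h xX by (simp add: S'_def)
        then show ?thesis using R(5)[OF x y] h by simp
      next
        case False
        then show ?thesis using R(5)[OF x y] h xX by (simp add: S'_def)
      qed
    qed
  qed
  have h1: "\<And>x. x \<in> diag a \<Longrightarrow> S x \<notin> {v, Suc v} \<Longrightarrow> S' x = S x"
    using XD by (auto simp: S'_def)
  have h2: "\<And>x. x \<in> diag a \<Longrightarrow> S x \<in> {v, Suc v} \<longleftrightarrow> S' x \<in> {v, Suc v}"
    using XD by (auto simp: S'_def)
  note WU = wt_update[of v a S S', OF vn(2) vn(1) h1 h2]
  have XS: "{x \<in> diag a. S' x = v} = X"
  proof
    show "{x \<in> diag a. S' x = v} \<subseteq> X" using Sv by (auto simp: S'_def split: if_splits)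
    show "X \<subseteq> {x \<in> diag a. S' x = v}" using XD by (auto simp: S'_def)
  qed
  have c1: "cnt a S' v = i" using XS X(2) by (simp add: cnt_def)
  have c2: "cnt a S' (Suc v) = j" using WU(2) cv cv1 c1 move.hyps(5) by simp
  have wt': "wt a S' = c[p := i, Suc p := j]"
    using WU(1) wS c1 c2 v_def by simp
  show ?case using S'A rel' wt' by blast
qed


theorem theorem4p17:
  fixes a :: "nat list" and n :: nat
  assumes "length a = n"
  shows "\<forall>c. atom_coeff a c = (\<Sum>S \<in> HSSF a. slide_coeff (wt a S) c)"
proof
  fix c
  define A where "A = {S \<in> ASSF a. wt a S = c}"
  define B where "B = {T \<in> HSSF a. fixed_slide (wt a T) c}"
  have HA: "\<And>T. T \<in> HSSF a \<Longrightarrow> T \<in> ASSF a" by (simp add: HSSF_def)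
  have bij: "bij_betw (H a) A B"
    unfolding bij_betw_def
  proof
    show "inj_on (H a) A"
    proof (rule inj_onI)
      fix S1 S2 assume s1: "S1 \<in> A" and s2: "S2 \<in> A" and e: "H a S1 = H a S2"
      have "mrel a S1 (H a S1)" "mrel a S2 (H a S2)" using H_props s1 s2 by (auto simp: A_def)
      then show "S1 = S2" using inj_rel[of S1 a S2 "H a S1"] s1 s2 e by (auto simp: A_def)
    qed
    show "H a ` A = B"
    proof
      show "H a ` A \<subseteq> B"
      proof
        fix T assume "T \<in> H a ` A"
        then obtain S where S: "S \<in> ASSF a" "wt a S = c" "T = H a S" by (auto simp: A_def)
        have "T \<in> HSSF a" "mrel a S T" using H_props[OF S(1)] S(3) by auto
        moreover have "fixed_slide (wt a T) c" using slide_of_rel[OF S(1) HA[OF \<open>T \<in> HSSF a\<close>] \<open>mrel a S T\<close>] S(2) by simp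
        ultimately show "T \<in> B" by (simp add: B_def)
      qed
      show "B \<subseteq> H a ` A"
      proof
        fix T assume "T \<in> B"
        then have T: "T \<in> HSSF a" "fixed_slide (wt a T) c" by (auto simp: B_def)
        obtain S where S: "S \<in> ASSF a" "mrel a S T" "wt a S = c" using split_exists[OF HA[OF T(1)] T(2)] by blast
        have "T = H a S" using H_unique[OF S(1) T(1) S(2)] .
        then show "T \<in> H a ` A" using S by (auto simp: A_def)
      qed
    qed
  qed
  have finH: "finite (HSSF a)" using finite_ASSF by (rule finite_subset[rotated]) (auto simp: HSSF_def)
  have "atom_coeff a c = card A" by (simp add: atom_coeff_def A_def)
  also have "\<dots> = card B" using bij by (rule bij_betw_same_card)
  also have "\<dots> = (\<Sum>T\<in>B. 1)" by simp
  also have "\<dots> = (\<Sum>T\<in>HSSF a. if fixed_slide (wt a T) c then 1 else 0)"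
    unfolding B_def using finH by (rule sum.inter_filter)
  also have "\<dots> = (\<Sum>S \<in> HSSF a. slide_coeff (wt a S) c)" by (simp add: slide_coeff_def)
  finally show "atom_coeff a c = (\<Sum>S \<in> HSSF a. slide_coeff (wt a S) c)" .
qed

end
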